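(* Let $(\lambda,\vartheta,\zeta_0)$ be fluid model data as in the context with $z_0>0$, and suppose $F_0(x,y)=\mathbf P(B^0\ge x;D^0\ge y)$ satisfies $|F_0(x,y)-F_0(x,y')|\le L|y-y'|$ for all $x,y,y'$. Let $\zeta(\cdot)$ be a measure valued fluid model solution with total mass $z(\cdot)$, let $S(0,s)=\int_0^sz(u)^{-1}du$, $\widetilde S(t)=\inf\{s:S(0,s)\ge t\}$, and $\widetilde\zeta(t)(x,y)=\zeta(\widetilde S(t))([x,\infty]\times[y,\infty])$. Then for all $x,y,y'\ge0$ and all $t\ge0$, $$|\widetilde\zeta(t)(x,y)-\widetilde\zeta(t)(x,y')|\le(z_0L+\lambda)|y-y'|.$$
   Context: $\overline{\mathbb R}_+=[0,\infty]$; $\mathbf M_1$ the finite nonnegative Borel measures on $\overline{\mathbb R}_+^2$ with the weak topology. Fluid model data: $\lambda>0$; $\vartheta$ a Borel probability measure on $\overline{\mathbb R}_+^2$ with $\vartheta(\{0\}\times\overline{\mathbb R}_+)=\vartheta(\overline{\mathbb R}_+\times\{0\})=\vartheta(\{(\infty,\infty)\})=0$, $(B,D)$ a random pair with law $\vartheta$, $\rho=\lambda\mathbf E[B]>1$; $\zeta_0\in\mathbf M_1$ with marginals free of atoms in $[0,\infty)$, total mass $z_0$, and $(B^0,D^0)$ with law $\zeta_0/z_0$. Corner sets $\mathcal C=\{[x,\infty)\times[y,\infty):x,y\in[0,\infty)\}\cup\{[x,\infty]\times[y,\infty]:x,y\in\overline{\mathbb R}_+\}$. A measure valued fluid model solution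 is a continuous $\zeta:[0,\infty)\to\mathbf M_1$ with total mass $z(t)$, $S(u,v)=\int_u^vz(s)^{-1}ds$, such that $\inf_{t>a}z(t)>0$ for all $a>0$ and $\zeta(t)(C)=\zeta_0(C+(S(0,t),t))+\lambda\int_0^t\vartheta(C+(S(s,t),t-s))ds$ for $C\in\mathcal C$, $t\ge0$ ($A+w=\{a+w:a\in A\}$). *)

theory Defs
  imports "HOL-Probability.Probability"
begin

text \<open>The extended half line [0,\<infinity>] is modelled by the type ennreal; the space
  [0,\<infinity>]^2 by ennreal \<times> ennreal with its Borel sigma algebra.\<close>

definition borel_finite :: "(ennreal \<times> ennreal) measure \<Rightarrow> bool" where
  "borel_finite M \<longleftrightarrow> sets M = sets borel \<and> finite_measure M"

definition shift :: "(ennreal \<times> ennreal) set \<Rightarrow> real \<Rightarrow> real \<Rightarrow> (ennreal \<times> ennreal) set" where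
  "shift A a c = (\<lambda>(u, v). (u + ennreal a, v + ennreal c)) ` A"

definition corner_sets :: "(ennreal \<times> ennreal) set set" where
  "corner_sets =
     {{x..<\<infinity>} \<times> {y..<\<infinity>} | x y. x \<noteq> \<infinity> \<and> y \<noteq> \<infinity>}
     \<union> {{x..} \<times> {y..} | x y. True}"

definition fluid_data ::
  "real \<Rightarrow> (ennreal \<times> ennreal) measure \<Rightarrow> (ennreal \<times> ennreal) measure \<Rightarrow> bool" where
  "fluid_data lam \<theta> \<zeta>0 \<longleftrightarrow>
     lam > 0 \<and>
     prob_space \<theta> \<and> sets \<theta> = sets borel \<and>
     measure \<theta> ({0} \<times> UNIV) = 0 \<and> measure \<theta> (UNIV \<times> {0}) = 0 \<and>
     measure \<theta> {(\<infinity>, \<infinity>)} = 0 \<and>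
     ennreal lam * (\<integral>\<^sup>+ p. fst p \<partial>\<theta>) > 1 \<and>
     borel_finite \<zeta>0 \<and>
     (\<forall>x. x \<noteq> \<infinity> \<longrightarrow> measure \<zeta>0 ({x} \<times> UNIV) = 0 \<and> measure \<zeta>0 (UNIV \<times> {x}) = 0)"

definition total_mass :: "(real \<Rightarrow> (ennreal \<times> ennreal) measure) \<Rightarrow> real \<Rightarrow> real" where
  "total_mass \<zeta> t = measure (\<zeta> t) UNIV"

definition Sfun :: "(real \<Rightarrow> (ennreal \<times> ennreal) measure) \<Rightarrow> real \<Rightarrow> real \<Rightarrow> real" where
  "Sfun \<zeta> u v = integral {u..v} (\<lambda>s. 1 / total_mass \<zeta> s)"

text \<open>Continuity into the finite Borel measures with the weak topology: integrals of
  continuous (hence bounded, the space being compact) real functions vary continuously.\<close>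
definition weakly_continuous :: "(real \<Rightarrow> (ennreal \<times> ennreal) measure) \<Rightarrow> bool" where
  "weakly_continuous \<zeta> \<longleftrightarrow>
     (\<forall>t\<ge>0. borel_finite (\<zeta> t)) \<and>
     (\<forall>f :: ennreal \<times> ennreal \<Rightarrow> real. continuous_on UNIV f \<longrightarrow>
        continuous_on {0..} (\<lambda>t. \<integral> p. f p \<partial>(\<zeta> t)))"

definition fluid_solution ::
  "real \<Rightarrow> (ennreal \<times> ennreal) measure \<Rightarrow> (ennreal \<times> ennreal) measure
     \<Rightarrow> (real \<Rightarrow> (ennreal \<times> ennreal) measure) \<Rightarrow> bool" where
  "fluid_solution lam \<theta> \<zeta>0 \<zeta> \<longleftrightarrow>
     weakly_continuous \<zeta> \<and>
     (\<forall>a>0. (INF t\<in>{a<..}. total_mass \<zeta> t) > 0) \<and>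
     (\<forall>C\<in>corner_sets. \<forall>t\<ge>0.
        measure (\<zeta> t) C =
          measure \<zeta>0 (shift C (Sfun \<zeta> 0 t) t)
          + lam * integral {0..t} (\<lambda>s. measure \<theta> (shift C (Sfun \<zeta> s t) (t - s))))"

definition Stilde :: "(real \<Rightarrow> (ennreal \<times> ennreal) measure) \<Rightarrow> real \<Rightarrow> real" where
  "Stilde \<zeta> t = Inf {s. 0 \<le> s \<and> t \<le> Sfun \<zeta> 0 s}"

definition zeta_tilde ::
  "(real \<Rightarrow> (ennreal \<times> ennreal) measure) \<Rightarrow> real \<Rightarrow> real \<Rightarrow> real \<Rightarrow> real" where
  "zeta_tilde \<zeta> t x y = measure (\<zeta> (Stilde \<zeta> t)) ({ennreal x..} \<times> {ennreal y..})"

end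

theory Submission
  imports Defs
begin

lemma img_shift_ennreal:
  fixes X E :: ennreal assumes "E \<noteq> \<infinity>"
  shows "(\<lambda>u. u + E) ` {X..} = {X + E..}"
proof
  show "(\<lambda>u. u + E) ` {X..} \<subseteq> {X + E..}" by (auto intro: add_right_mono)
  show "{X + E..} \<subseteq> (\<lambda>u. u + E) ` {X..}"
  proof
    fix w assume "w \<in> {X + E..}"
    then have w: "X + E \<le> w" by simp
    have "E \<le> w" proof -
      have "E \<le> X + E" by (rule add_increasing) auto
      then show ?thesis using w by (rule order_trans)
    qed
    have "w = (w - E) + E" using \<open>E \<le> w\<close> by (simp add: diff_add_cancel_ennreal)
    moreover have "X \<le> w - E" using w by (simp add: ennreal_le_minus_iff)
    ultimately show "w \<in> (\<lambda>u. u + E) ` {X..}" by (metis atLeast_iff image_eqI)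
  qed
qed

lemma shift_Times: "shift (A \<times> B) a c = ((\<lambda>u. u + ennreal a) ` A) \<times> ((\<lambda>v. v + ennreal c) ` B)"
proof -
  have "(\<lambda>(u, v). (u + ennreal a, v + ennreal c)) = map_prod (\<lambda>u. u + ennreal a) (\<lambda>v. v + ennreal c)"
    by (rule ext) auto
  then show ?thesis unfolding shift_def by (simp add: map_prod_surj_on)
qed

lemma shift_corner:
  assumes "0 \<le> x" "0 \<le> y" "0 \<le> c"
  shows "shift ({ennreal x..} \<times> {ennreal y..}) a c = {ennreal (x + max a 0)..} \<times> {ennreal (y + c)..}"
proof -
  have e: "ennreal a = ennreal (max a 0)" by (cases "a \<le> 0") (auto simp: ennreal_neg)
  show ?thesis unfolding shift_Times e
    by (subst img_shift_ennreal, simp)+ (simp add: assms)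
qed

lemma integral_le_len:
  fixes f :: "real \<Rightarrow> real"
  assumes "0 \<le> t" "\<And>u. u \<in> {0..t} \<Longrightarrow> f u \<le> 1"
  shows "integral {0..t} f \<le> t"
proof (cases "f integrable_on {0..t}")
  case True
  have "integral {0..t} f \<le> integral {0..t} (\<lambda>_. 1::real)"
    by (rule integral_le) (use True assms in auto)
  then show ?thesis using assms by simp
next
  case False then show ?thesis using assms by (simp add: not_integrable_integral)
qed

lemma reflect_shift:
  fixes G :: "real \<Rightarrow> real"
  assumes "G integrable_on {C-s..C}" "0 \<le> s"
  shows "integral {0..s} (\<lambda>u. G (C - u)) = integral {C-s..C} G"
proof -
  have "(G has_integral integral {C-s..C} G) (cbox (C-s) C)"
    using assms(1) by (simp add: has_integral_integral)
  from has_integral_affinity[OF this, of "-1" C]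
  have "((\<lambda>x. G (- x + C)) has_integral integral {C-s..C} G) ((\<lambda>x. - x + C) ` {C-s..C})"
    by simp
  moreover have "(\<lambda>x. - x + C) ` {C-s..C} = {0..s}"
  proof
    show "(\<lambda>x. - x + C) ` {C-s..C} \<subseteq> {0..s}" by auto
    show "{0..s} \<subseteq> (\<lambda>x. - x + C) ` {C-s..C}"
    proof
      fix u assume "u \<in> {0..s}"
      then show "u \<in> (\<lambda>x. - x + C) ` {C-s..C}" by (intro image_eqI[of _ _ "C - u"]) auto
    qed
  qed
  ultimately show ?thesis by (simp add: integral_unique)
qed

lemma closed_corner: "closed ({a..} \<times> {b..} :: (ennreal \<times> ennreal) set)"
  by (intro closed_Times closed_atLeast)

lemma corner_mono:
  fixes a1 a2 b1 b2 :: ennreal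
  shows "a2 \<le> a1 \<Longrightarrow> b2 \<le> b1 \<Longrightarrow> {a1..} \<times> {b1..} \<subseteq> {a2..} \<times> {b2..}"
  by auto

lemma G_bounds:
  assumes "prob_space \<theta>"
  shows "0 \<le> measure \<theta> A" "measure \<theta> A \<le> 1"
  using assms by (auto simp: prob_space.prob_le_1)

lemma G_integrable:
  assumes "prob_space \<theta>" "sets \<theta> = sets borel"
  shows "(\<lambda>w. measure \<theta> (UNIV \<times> {ennreal w..})) integrable_on {a..b}"
proof -
  interpret prob_space \<theta> by fact
  have "mono_on {a..b} (\<lambda>w. - measure \<theta> (UNIV \<times> {ennreal w..}))"
  proof (rule mono_onI)
    fix r s :: real assume "r \<le> s"
    have "UNIV \<times> {ennreal s..} \<subseteq> UNIV \<times> {ennreal r..}"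
      using \<open>r \<le> s\<close> by (auto intro: order_trans[OF ennreal_leI])
    moreover have "UNIV \<times> {ennreal r..} \<in> sets \<theta>"
      unfolding assms(2) by (rule borel_closed) (intro closed_Times closed_atLeast closed_UNIV)
    ultimately have "measure \<theta> (UNIV \<times> {ennreal s..}) \<le> measure \<theta> (UNIV \<times> {ennreal r..})"
      by (rule finite_measure_mono)
    then show "- measure \<theta> (UNIV \<times> {ennreal r..}) \<le> - measure \<theta> (UNIV \<times> {ennreal s..})"
      by simp
  qed
  then have "(\<lambda>w. - measure \<theta> (UNIV \<times> {ennreal w..})) integrable_on {a..b}"
    by (rule integrable_on_mono_on)
  from integrable_neg[OF this] show ?thesis by simp
qed

lemma G_diff_bound:
  fixes G :: "real \<Rightarrow> real"
  assumes int: "\<And>a b. G integrable_on {a..b}" and G0: "\<And>w. 0 \<le> G w" and G1: "\<And>w. G w \<le> 1"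
    and "y \<le> y'" "0 \<le> s"
  shows "integral {y..y+s} G - integral {y'..y'+s} G \<le> y' - y"
proof -
  have le: "integral {a..b} G \<le> b - a" if "a \<le> b" for a b
  proof -
    have "integral {a..b} G \<le> integral {a..b} (\<lambda>_. 1::real)"
      by (rule integral_le) (use int G1 in auto)
    then show ?thesis using that by simp
  qed
  have nn: "0 \<le> integral {a..b} G" for a b
    by (rule integral_nonneg) (use int G0 in auto)
  show ?thesis
  proof (cases "y' \<le> y + s")
    case True
    have "integral {y..y'} G + integral {y'..y+s} G = integral {y..y+s} G"
      by (rule Henstock_Kurzweil_Integration.integral_combine) (use True assms int in auto)
    moreover have "integral {y'..y+s} G + integral {y+s..y'+s} G = integral {y'..y'+s} G"
      by (rule Henstock_Kurzweil_Integration.integral_combine) (use True assms int in auto)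
    ultimately show ?thesis using le[of y y'] nn[of "y+s" "y'+s"] assms by linarith
  next
    case False
    then show ?thesis using le[of y "y+s"] nn[of y' "y'+s"] assms by linarith
  qed
qed

lemma G_anti:
  assumes "prob_space \<theta>" "sets \<theta> = sets borel" "r \<le> s"
  shows "measure \<theta> (UNIV \<times> {ennreal s..}) \<le> measure \<theta> (UNIV \<times> {ennreal r..})"
proof -
  interpret prob_space \<theta> by fact
  have "UNIV \<times> {ennreal s..} \<subseteq> UNIV \<times> {ennreal r..}"
    using \<open>r \<le> s\<close> by (auto intro: order_trans[OF ennreal_leI])
  moreover have "UNIV \<times> {ennreal r..} \<in> sets \<theta>"
    unfolding assms(2) by (rule borel_closed) (intro closed_Times closed_atLeast closed_UNIV)
  ultimately show ?thesis by (rule finite_measure_mono)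
qed

lemma theta_part:
  fixes Sf :: "real \<Rightarrow> real"
  assumes P: "prob_space \<theta>" and sb: "sets \<theta> = sets borel"
    and x: "0 \<le> x" and y: "0 \<le> y" and yy: "y \<le> y'" and s: "0 \<le> s"
    and mono: "\<And>u1 u2. 0 \<le> u1 \<Longrightarrow> u1 \<le> u2 \<Longrightarrow> u2 \<le> s \<Longrightarrow> Sf u2 \<le> Sf u1"
  defines "I \<equiv> \<lambda>w. integral {0..s} (\<lambda>u. measure \<theta> (shift ({ennreal x..} \<times> {ennreal w..}) (Sf u) (s - u)))"
  shows "0 \<le> I y - I y' \<and> I y - I y' \<le> y' - y"
proof -
  interpret prob_space \<theta> by fact
  define g where "g w u = measure \<theta> ({ennreal (x + max (Sf u) 0)..} \<times> {ennreal (w + s - u)..})" for w u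
  define G where "G w = measure \<theta> (UNIV \<times> {ennreal w..})" for w
  define H where "H w u = G (w + s - u)" for w u
  have eqI: "I w = integral {0..s} (g w)" if "0 \<le> w" for w
    unfolding I_def
    by (rule integral_cong) (simp add: g_def shift_corner x that add_diff_eq)
  have meas: "{a..} \<times> {b..} \<in> sets \<theta>" for a b
    unfolding sb by (rule borel_closed) (rule closed_corner)
  have gmono: "mono_on {0..s} (g w)" for w
  proof (rule mono_onI)
    fix u1 u2 assume u: "u1 \<in> {0..s}" "u2 \<in> {0..s}" "u1 \<le> u2"
    have "Sf u2 \<le> Sf u1" using mono u by auto
    then have "{ennreal (x + max (Sf u1) 0)..} \<times> {ennreal (w + s - u1)..}
        \<subseteq> {ennreal (x + max (Sf u2) 0)..} \<times> {ennreal (w + s - u2)..}"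
      using u by (intro corner_mono ennreal_leI) auto
    then show "g w u1 \<le> g w u2" unfolding g_def by (rule finite_measure_mono[OF _ meas])
  qed
  have gint: "g w integrable_on {0..s}" for w by (rule integrable_on_mono_on[OF gmono])
  have Hmono: "mono_on {0..s} (H w)" for w
    unfolding H_def G_def by (rule mono_onI) (rule G_anti[OF P sb], auto)
  have Hint: "H w integrable_on {0..s}" for w by (rule integrable_on_mono_on[OF Hmono])
  have pw: "0 \<le> g y u - g y' u \<and> g y u - g y' u \<le> H y u - H y' u" if u: "u \<in> {0..s}" for u
  proof -
    define A where "A = {ennreal (x + max (Sf u) 0)..}"
    define Y where "Y = ennreal (y + s - u)"
    define Y' where "Y' = ennreal (y' + s - u)"
    have YY: "Y \<le> Y'" unfolding Y_def Y'_def using yy by (intro ennreal_leI) auto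
    have sub1: "A \<times> {Y'..} \<subseteq> A \<times> {Y..}" using YY by auto
    have sub2: "UNIV \<times> {Y'..} \<subseteq> UNIV \<times> {Y..}" using YY by auto
    have mA: "A \<times> {b..} \<in> sets \<theta>" for b unfolding A_def by (rule meas)
    have mU: "UNIV \<times> {b..} \<in> sets \<theta>" for b :: ennreal
      unfolding sb by (rule borel_closed) (intro closed_Times closed_atLeast closed_UNIV)
    have d1: "g y u - g y' u = measure \<theta> (A \<times> {Y..} - A \<times> {Y'..})"
      unfolding g_def A_def[symmetric] Y_def[symmetric] Y'_def[symmetric]
      by (rule finite_measure_Diff[symmetric, OF mA mA sub1])
    have d2: "H y u - H y' u = measure \<theta> (UNIV \<times> {Y..} - UNIV \<times> {Y'..})"
      unfolding H_def G_def Y_def[symmetric] Y'_def[symmetric]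
      by (rule finite_measure_Diff[symmetric, OF mU mU sub2])
    have "measure \<theta> (A \<times> {Y..} - A \<times> {Y'..}) \<le> measure \<theta> (UNIV \<times> {Y..} - UNIV \<times> {Y'..})"
      by (rule finite_measure_mono) (auto intro!: sets.Diff mU)
    then show ?thesis using d1 d2 by simp
  qed
  have "I y - I y' = integral {0..s} (\<lambda>u. g y u - g y' u)"
    using eqI[OF y] eqI[of y'] y yy integral_diff[OF gint gint] by simp
  moreover have "0 \<le> integral {0..s} (\<lambda>u. g y u - g y' u)"
    by (rule integral_nonneg) (use gint pw in \<open>auto intro: integrable_diff\<close>)
  moreover have "integral {0..s} (\<lambda>u. g y u - g y' u) \<le> integral {0..s} (\<lambda>u. H y u - H y' u)"
    by (rule integral_le) (use gint Hint pw in \<open>auto intro: integrable_diff\<close>)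
  moreover have "integral {0..s} (\<lambda>u. H y u - H y' u) = integral {0..s} (H y) - integral {0..s} (H y')"
    by (rule integral_diff[OF Hint Hint])
  moreover have HG: "integral {0..s} (H w) = integral {w..w+s} G" for w
  proof -
    have "integral {0..s} (\<lambda>u. G ((w + s) - u)) = integral {(w+s)-s..w+s} G"
      by (rule reflect_shift) (use s in \<open>auto simp: G_def intro: G_integrable[OF P sb]\<close>)
    moreover have "H w = (\<lambda>u. G ((w + s) - u))" by (rule ext) (simp add: H_def)
    ultimately show ?thesis by simp
  qed
  moreover have Gint: "G integrable_on {a..b}" for a b
    unfolding G_def[abs_def] by (rule G_integrable[OF P sb])
  moreover have "integral {y..y+s} G - integral {y'..y'+s} G \<le> y' - y"
    by (rule G_diff_bound[OF Gint]) (use yy s G_bounds[OF P] in \<open>auto simp: G_def intro: G_integrable[OF P sb]\<close>)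
  ultimately show ?thesis using HG[of y] HG[of y'] by linarith
qed

theorem mainTheorem9:
  fixes lam L :: real and \<theta> \<zeta>0 :: "(ennreal \<times> ennreal) measure"
    and \<zeta> :: "real \<Rightarrow> (ennreal \<times> ennreal) measure"
  assumes data: "fluid_data lam \<theta> \<zeta>0"
    and z0_pos: "measure \<zeta>0 UNIV > 0"
    and lip: "\<And>x y y'. 0 \<le> x \<Longrightarrow> 0 \<le> y \<Longrightarrow> 0 \<le> y' \<Longrightarrow>
      \<bar>measure \<zeta>0 ({ennreal x..} \<times> {ennreal y..}) / measure \<zeta>0 UNIV
       - measure \<zeta>0 ({ennreal x..} \<times> {ennreal y'..}) / measure \<zeta>0 UNIV\<bar> \<le> L * \<bar>y - y'\<bar>"
    and sol: "fluid_solution lam \<theta> \<zeta>0 \<zeta>"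
    and x: "0 \<le> x" and y: "0 \<le> y" and y': "0 \<le> y'" and t: "0 \<le> t"
  shows "\<bar>zeta_tilde \<zeta> t x y - zeta_tilde \<zeta> t x y'\<bar>
           \<le> (measure \<zeta>0 UNIV * L + lam) * \<bar>y - y'\<bar>"
proof -
  define z0 where "z0 = measure \<zeta>0 UNIV"
  define z where "z = total_mass \<zeta>"
  have z0p: "0 < z0" using z0_pos z0_def by simp
  have lam: "lam > 0" and P: "prob_space \<theta>" and sb\<theta>: "sets \<theta> = sets borel" and bf0: "borel_finite \<zeta>0"
    using data unfolding fluid_data_def by auto
  have wc: "weakly_continuous \<zeta>" and INFc: "\<forall>a>0. (INF t\<in>{a<..}. total_mass \<zeta> t) > 0"
    and eq: "\<And>C t. C \<in> corner_sets \<Longrightarrow> 0 \<le> t \<Longrightarrow> measure (\<zeta> t) C = measure \<zeta>0 (shift C (Sfun \<zeta> 0 t) t)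
          + lam * integral {0..t} (\<lambda>s. measure \<theta> (shift C (Sfun \<zeta> s t) (t - s)))"
    using sol unfolding fluid_solution_def by auto
  have bft: "sets (\<zeta> t) = sets borel" "finite_measure (\<zeta> t)" if "0 \<le> t" for t
    using wc that unfolding weakly_continuous_def borel_finite_def by auto
  have fm0: "finite_measure \<zeta>0" and s0: "sets \<zeta>0 = sets borel" using bf0 borel_finite_def by auto
  have corner: "{a..} \<times> {b..} \<in> corner_sets" for a b :: ennreal unfolding corner_sets_def by blast
  have UNIV_corner: "(UNIV :: (ennreal\<times>ennreal) set) = {0..} \<times> {0..}" by auto
  have UNIVc: "UNIV \<in> corner_sets" using corner[of 0 0] UNIV_corner by simp
  have Sf00: "Sfun \<zeta> 0 0 = 0" unfolding Sfun_def by simp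
  have shift00: "shift UNIV 0 0 = UNIV" unfolding UNIV_corner shift_Times by simp
  have z00: "z 0 = z0"
    using eq[OF UNIVc, of 0] unfolding Sf00 shift00 by (simp add: z_def total_mass_def z0_def)
  have sp0: "space \<zeta>0 = UNIV" using sets_eq_imp_space_eq[OF s0] by simp
  have zle: "z t \<le> z0 + lam * t" if "0 \<le> t" for t
  proof -
    have "measure \<zeta>0 (shift UNIV (Sfun \<zeta> 0 t) t) \<le> z0"
      using finite_measure.bounded_measure[OF fm0] sp0 z0_def by simp
    moreover have "integral {0..t} (\<lambda>s. measure \<theta> (shift UNIV (Sfun \<zeta> s t) (t - s))) \<le> t"
      by (rule integral_le_len) (use that P in \<open>auto simp: prob_space.prob_le_1\<close>)
    then have "lam * integral {0..t} (\<lambda>s. measure \<theta> (shift UNIV (Sfun \<zeta> s t) (t - s))) \<le> lam * t"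
      using lam by simp
    ultimately show ?thesis using eq[OF UNIVc that] by (simp add: z_def total_mass_def)
  qed
  have zcont: "continuous_on {0..} z"
  proof -
    have "continuous_on {0..} (\<lambda>t. \<integral> p. (\<lambda>_. 1::real) p \<partial>(\<zeta> t))"
      using wc unfolding weakly_continuous_def by (auto simp del: lebesgue_integral_const)
    moreover have "(\<integral> p. (\<lambda>_. 1::real) p \<partial>(\<zeta> t)) = z t" if "t \<in> {0..}" for t
    proof -
      have "space (\<zeta> t) = UNIV" using sets_eq_imp_space_eq[OF bft(1)] that by simp
      then show ?thesis by (simp add: z_def total_mass_def)
    qed
    ultimately show ?thesis using continuous_on_cong[of "{0..}" "{0..}" "\<lambda>t. \<integral> p. (\<lambda>_. 1::real) p \<partial>(\<zeta> t)" z]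
      by simp
  qed
  have zpos: "0 < z t" if "0 \<le> t" for t
  proof (cases "t = 0")
    case True then show ?thesis using z00 z0p by simp
  next
    case False
    then have "t / 2 > 0" "t \<in> {t/2<..}" using that by auto
    with INFc have "0 < (INF u\<in>{t/2<..}. z u)" by (auto simp: z_def)
    also have "(INF u\<in>{t/2<..}. z u) \<le> z t"
    proof (rule cINF_lower)
      show "bdd_below (z ` {t/2<..})"
        by (rule bdd_belowI[of _ 0]) (auto simp: z_def total_mass_def)
    qed fact
    finally show ?thesis .
  qed
  have invcont: "continuous_on {0..} (\<lambda>u. 1 / z u)"
    by (rule continuous_on_divide[OF continuous_on_const zcont]) (use zpos in force)
  have invint: "(\<lambda>u. 1 / z u) integrable_on {a..b}" if "0 \<le> a" for a b
    by (rule integrable_continuous_interval, rule continuous_on_subset[OF invcont]) (use that in auto)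
  have Sfmono: "Sfun \<zeta> u2 s \<le> Sfun \<zeta> u1 s" if "0 \<le> u1" "u1 \<le> u2" "u2 \<le> s" for u1 u2 s
  proof -
    have "integral {u1..u2} (\<lambda>u. 1 / z u) + integral {u2..s} (\<lambda>u. 1 / z u) = integral {u1..s} (\<lambda>u. 1 / z u)"
      by (rule Henstock_Kurzweil_Integration.integral_combine) (use that invint in auto)
    moreover have "0 \<le> integral {u1..u2} (\<lambda>u. 1 / z u)"
      by (rule integral_nonneg) (use that invint zpos in \<open>auto intro: less_imp_le\<close>)
    ultimately show ?thesis unfolding Sfun_def z_def by linarith
  qed
  have Sf_large: "(ln (z0 + lam * s) - ln z0) / lam \<le> Sfun \<zeta> 0 s" if "0 \<le> s" for s
  proof -
    have "((\<lambda>u. 1 / (z0 + lam * u)) has_integral (ln (z0 + lam * s) / lam - ln (z0 + lam*0) / lam)) {0..s}"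
    proof (rule fundamental_theorem_of_calculus)
      fix u assume u: "u \<in> {0..s}"
      then have pos: "0 < z0 + lam * u" using z0p lam by (simp add: add_pos_nonneg)
      have "((\<lambda>u. ln (z0 + lam * u) / lam) has_real_derivative 1 / (z0 + lam * u)) (at u)"
        using pos lam by (auto intro!: derivative_eq_intros simp: divide_simps)
      then show "((\<lambda>u. ln (z0 + lam * u) / lam) has_vector_derivative 1 / (z0 + lam * u)) (at u within {0..s})"
        by (simp add: has_real_derivative_iff_has_vector_derivative[symmetric] has_field_derivative_at_within)
    qed (use that in simp)
    then have "(ln (z0 + lam * s) - ln z0) / lam = integral {0..s} (\<lambda>u. 1 / (z0 + lam * u))"
      by (simp add: integral_unique diff_divide_distrib)
    also have "\<dots> \<le> integral {0..s} (\<lambda>u. 1 / z u)"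
    proof (rule integral_le)
      show "(\<lambda>u. 1 / (z0 + lam * u)) integrable_on {0..s}"
        using \<open>(_ has_integral _) {0..s}\<close> by blast
      show "(\<lambda>u. 1 / z u) integrable_on {0..s}" by (rule invint) simp
      fix u assume "u \<in> {0..s}"
      then show "1 / (z0 + lam * u) \<le> 1 / z u"
        using zpos[of u] zle[of u] by (intro divide_left_mono) auto
    qed
    finally show ?thesis unfolding Sfun_def z_def .
  qed
  have Sne: "\<exists>s. 0 \<le> s \<and> t \<le> Sfun \<zeta> 0 s"
  proof (intro exI conjI)
    define s where "s = z0 * (exp (lam * t) - 1) / lam"
    show "0 \<le> s" unfolding s_def using z0p lam t by (intro divide_nonneg_pos mult_nonneg_nonneg) auto
    have "z0 + lam * s = z0 * exp (lam * t)" unfolding s_def using lam by (simp add: field_simps)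
    then have "(ln (z0 + lam * s) - ln z0) / lam = t" using z0p lam by (simp add: ln_mult)
    then show "t \<le> Sfun \<zeta> 0 s" using Sf_large[OF \<open>0 \<le> s\<close>] by simp
  qed
  define s where "s = Stilde \<zeta> t"
  have s0: "0 \<le> s" unfolding s_def Stilde_def
    by (rule cInf_greatest) (use Sne in auto)
  have key: "\<bar>zeta_tilde \<zeta> t x y - zeta_tilde \<zeta> t x y'\<bar> \<le> (z0 * L + lam) * (y' - y)"
    if y: "0 \<le> y" and yy: "y \<le> y'" for y y'
  proof -
    define a where "a = Sfun \<zeta> 0 s"
    define I where "I \<equiv> \<lambda>w. integral {0..s} (\<lambda>u. measure \<theta> (shift ({ennreal x..} \<times> {ennreal w..}) (Sfun \<zeta> u s) (s - u)))"
    define m where "m w = measure \<zeta>0 ({ennreal (x + max a 0)..} \<times> {ennreal (w + s)..})" for w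
    have zt: "zeta_tilde \<zeta> t x w = m w + lam * I w" if "0 \<le> w" for w
    proof -
      have "zeta_tilde \<zeta> t x w = measure (\<zeta> s) ({ennreal x..} \<times> {ennreal w..})"
        unfolding zeta_tilde_def s_def ..
      also have "\<dots> = measure \<zeta>0 (shift ({ennreal x..} \<times> {ennreal w..}) (Sfun \<zeta> 0 s) s) + lam * I w"
        unfolding I_def by (rule eq[OF corner s0])
      also have "shift ({ennreal x..} \<times> {ennreal w..}) (Sfun \<zeta> 0 s) s = {ennreal (x + max a 0)..} \<times> {ennreal (w + s)..}"
        unfolding a_def by (rule shift_corner[OF x that s0])
      finally show ?thesis unfolding m_def .
    qed
    have th: "0 \<le> I y - I y' \<and> I y - I y' \<le> y' - y" unfolding I_def
      by (rule theta_part[OF P sb\<theta> x y yy s0]) (rule Sfmono; auto)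
    have "\<bar>m y / z0 - m y' / z0\<bar> \<le> L * \<bar>(y + s) - (y' + s)\<bar>"
      unfolding m_def z0_def by (rule lip) (use x y yy s0 in auto)
    then have "\<bar>m y - m y'\<bar> / z0 \<le> L * (y' - y)"
      using z0p yy by (simp add: diff_divide_distrib[symmetric] abs_divide)
    then have mb: "\<bar>m y - m y'\<bar> \<le> z0 * L * (y' - y)"
      using z0p by (simp add: pos_divide_le_eq mult.commute mult.left_commute)
    have "zeta_tilde \<zeta> t x y - zeta_tilde \<zeta> t x y' = (m y - m y') + lam * (I y - I y')"
      using zt[OF y] zt[of y'] y yy by (simp add: algebra_simps)
    moreover have "lam * (I y - I y') \<le> lam * (y' - y)" "0 \<le> lam * (I y - I y')"
      using th lam by (auto intro: mult_left_mono)
    moreover have "(z0 * L + lam) * (y' - y) = z0 * L * (y' - y) + lam * (y' - y)"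
      by (simp add: algebra_simps)
    ultimately show ?thesis using mb abs_triangle_ineq[of "m y - m y'" "lam * (I y - I y')"]
      by linarith
  qed
  show ?thesis
  proof (cases "y \<le> y'")
    case True then show ?thesis using key[OF y True] z0_def by simp
  next
    case False
    then have "\<bar>zeta_tilde \<zeta> t x y' - zeta_tilde \<zeta> t x y\<bar> \<le> (z0 * L + lam) * (y - y')"
      using key[OF y'] by simp
    then show ?thesis using False z0_def by (simp add: abs_minus_commute)
  qed
qed

end
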